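(* Let $\phi$ be an entanglement-breaking channel acting on $d\times d$ complex matrices. Suppose there exists a positive semidefinite matrix $A\ge 0$ with $\operatorname{rk}A=r<d$ such that $s=\operatorname{rk}\phi(A)$ satisfies $r^2+s^2<2dr$. Then the kernel of $\phi$ (as a linear map on $\mathcal M(d;\mathbb C)$) satisfies $$\dim\ker\phi\ \ge\ 2dr-r^2-s^2\ >\ 0 .$$
   Context: A quantum channel is a completely positive, trace-preserving linear map on $\mathcal M(d;\mathbb C)$. It is entanglement-breaking (EB) if for every system $B$ and every state $\rho_{AB}$ the output $(\phi\otimes I)(\rho_{AB})$ is separable; equivalently, $\phi$ can be written as $\phi(X)=\sum_i\rho_i\operatorname{Tr}[E_iX]$ with density matrices $\rho_i$ and positive operators $E_i$ summing to $\mathbb 1$. *)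

theory Defs
  imports "HOL-Analysis.Analysis"
begin

text \<open>Complex d x d matrices are represented as complex^'n^'n, with d = CARD('n).\<close>

definition mscale :: "complex \<Rightarrow> complex^'n^'m \<Rightarrow> complex^'n^'m" where
  "mscale c A = (\<chi> i j. c * A$i$j)"

definition cdim :: "(complex^'n^'m) set \<Rightarrow> nat" where
  "cdim S = vector_space.dim mscale S"

definition hermitian :: "complex^'n^'n \<Rightarrow> bool" where
  "hermitian A \<longleftrightarrow> (\<forall>i j. A$i$j = cnj (A$j$i))"

definition psd :: "complex^'n^'n \<Rightarrow> bool" where
  "psd A \<longleftrightarrow> hermitian A \<and>
     (\<forall>x::complex^'n. 0 \<le> Re (\<Sum>i\<in>UNIV. \<Sum>j\<in>UNIV. cnj (x$i) * A$i$j * x$j))"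

definition density :: "complex^'n^'n \<Rightarrow> bool" where
  "density \<rho> \<longleftrightarrow> psd \<rho> \<and> trace \<rho> = 1"

definition clinear_map :: "(complex^'n^'n \<Rightarrow> complex^'n^'n) \<Rightarrow> bool" where
  "clinear_map \<phi> \<longleftrightarrow> (\<forall>X Y. \<phi> (X + Y) = \<phi> X + \<phi> Y) \<and> (\<forall>c X. \<phi> (mscale c X) = mscale c (\<phi> X))"

definition munit :: "'n \<Rightarrow> 'n \<Rightarrow> complex^'n^'n" where
  "munit i j = (\<chi> k l. if k = i \<and> l = j then 1 else 0)"

definition choi :: "(complex^'n^'n \<Rightarrow> complex^'n^'n) \<Rightarrow> complex^('n \<times> 'n)^('n \<times> 'n)" where
  "choi \<phi> = (\<chi> p q. \<phi> (munit (fst p) (fst q)) $ snd p $ snd q)"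

definition completely_positive :: "(complex^'n^'n \<Rightarrow> complex^'n^'n) \<Rightarrow> bool" where
  "completely_positive \<phi> \<longleftrightarrow> psd (choi \<phi>)"

definition quantum_channel :: "(complex^'n^'n \<Rightarrow> complex^'n^'n) \<Rightarrow> bool" where
  "quantum_channel \<phi> \<longleftrightarrow> clinear_map \<phi> \<and> completely_positive \<phi> \<and> (\<forall>X. trace (\<phi> X) = trace X)"

text \<open>Entanglement-breaking channel, via the measure-and-prepare (Holevo) form
  phi(X) = sum_i rho_i Tr[E_i X] with density matrices rho_i and a POVM (E_i).\<close>
definition entanglement_breaking :: "(complex^'n^'n \<Rightarrow> complex^'n^'n) \<Rightarrow> bool" where
  "entanglement_breaking \<phi> \<longleftrightarrow> quantum_channel \<phi> \<and>
     (\<exists>(I::nat set) \<rho> E. finite I \<and> (\<forall>i\<in>I. density (\<rho> i) \<and> psd (E i)) \<and>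
        (\<Sum>i\<in>I. E i) = mat 1 \<and>
        (\<forall>X. \<phi> X = (\<Sum>i\<in>I. mscale (trace (E i ** X)) (\<rho> i))))"

end

theory Submission
  imports Defs "HOL-Library.Complex_Order"
begin


definition cv :: "complex^'n \<Rightarrow> complex^'n" where
  "cv x = (\<chi> i. cnj (x$i))"

definition bl :: "complex^'n \<Rightarrow> complex^'n^'n \<Rightarrow> complex^'n \<Rightarrow> complex" where
  "bl u X w = (\<Sum>i\<in>UNIV. \<Sum>j\<in>UNIV. u$i * X$i$j * w$j)"

definition ev :: "'n \<Rightarrow> complex^'n" where
  "ev j = (\<chi> i. if i = j then 1 else 0)"

lemma cv_nth[simp]: "cv x $ i = cnj (x$i)" by (simp add: cv_def)
lemma cv_cv[simp]: "cv (cv x) = x" by (simp add: vec_eq_iff)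
lemma cv_add[simp]: "cv (x + y) = cv x + cv y" by (simp add: vec_eq_iff)
lemma cv_scale[simp]: "cv (c *s x) = cnj c *s cv x" by (simp add: vec_eq_iff)
lemma cv_0[simp]: "cv 0 = 0" by (simp add: vec_eq_iff)

lemma bl_add1: "bl (u + u') X w = bl u X w + bl u' X w"
  by (simp add: bl_def algebra_simps sum.distrib)
lemma bl_add3: "bl u X (w + w') = bl u X w + bl u X w'"
  by (simp add: bl_def algebra_simps sum.distrib)
lemma bl_add2: "bl u (X + Y) w = bl u X w + bl u Y w"
  by (simp add: bl_def algebra_simps sum.distrib)
lemma bl_scale1: "bl (c *s u) X w = c * bl u X w"
  by (simp add: bl_def algebra_simps sum_distrib_left)
lemma bl_scale3: "bl u X (c *s w) = c * bl u X w"
  by (simp add: bl_def algebra_simps sum_distrib_left)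
lemma bl_scale2: "bl u (mscale c X) w = c * bl u X w"
  by (simp add: bl_def mscale_def algebra_simps sum_distrib_left)
lemma bl_0_1[simp]: "bl 0 X w = 0" by (simp add: bl_def)
lemma bl_0_3[simp]: "bl u X 0 = 0" by (simp add: bl_def)
lemma bl_0_2[simp]: "bl u 0 w = 0" by (simp add: bl_def)

lemma sum_if_const: "(\<Sum>j\<in>A. if P then f j else 0) = (if P then sum f A else 0)"
  by simp

lemma bl_ev1: "bl (ev i) X w = (X *v w) $ i"
proof -
  have "\<And>a. (\<Sum>j\<in>UNIV. (if a = i then 1 else 0) * X$a$j * w$j) = (if a = i then (\<Sum>j\<in>UNIV. X$a$j * w$j) else 0)"
    by simp
  hence "bl (ev i) X w = (\<Sum>a\<in>UNIV. if a = i then (\<Sum>j\<in>UNIV. X$a$j * w$j) else 0)"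
    unfolding bl_def ev_def vec_lambda_beta by presburger
  also have "\<dots> = (X *v w) $ i" by (simp add: matrix_vector_mult_def)
  finally show ?thesis .
qed

lemma bl_ev3: "bl u X (ev j) = (\<Sum>a\<in>UNIV. u$a * X$a$j)"
proof -
  have "\<And>a. (\<Sum>c\<in>UNIV. u$a * X$a$c * (if c = j then 1 else 0)) = u$a * X$a$j"
    by (simp add: if_distrib cong: if_cong)
  thus ?thesis unfolding bl_def ev_def vec_lambda_beta by presburger
qed

lemma bl_ev_ev: "bl (ev i) X (ev j) = X$i$j"
  unfolding bl_ev1 matrix_vector_mult_def by (simp add: ev_def if_distrib cong: if_cong)

lemma bl_herm:
  assumes H: "hermitian M"
  shows "bl (cv x) M y = cnj (bl (cv y) M x)"
proof -
  have "cnj (bl (cv y) M x) = (\<Sum>i\<in>UNIV. \<Sum>j\<in>UNIV. y$i * M$j$i * cnj (x$j))"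
  proof -
    have c: "cnj (M$i$j) = M$j$i" for i j using H unfolding hermitian_def by (metis complex_cnj_cnj)
    show ?thesis unfolding bl_def by (simp add: c)
  qed
  also have "\<dots> = (\<Sum>j\<in>UNIV. \<Sum>i\<in>UNIV. y$i * M$j$i * cnj (x$j))"
    by (rule sum.swap)
  also have "\<dots> = bl (cv x) M y"
    unfolding bl_def by (simp add: mult_ac)
  finally show ?thesis by simp
qed

lemma psd_herm: "psd M \<Longrightarrow> hermitian M" by (simp add: psd_def)

lemma q_real: "hermitian M \<Longrightarrow> Im (bl (cv x) M x) = 0"
  using bl_herm[of M x x] by (simp add: complex_eq_iff)

lemma psd_q: "psd M \<Longrightarrow> 0 \<le> Re (bl (cv x) M x)"
  unfolding psd_def bl_def by simp

lemma psd_q_ge: "psd M \<Longrightarrow> 0 \<le> bl (cv x) M x"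
  using psd_q[of M x] q_real[of M x] psd_herm[of M] by (simp add: less_eq_complex_def)

lemma q_expand:
  "bl (cv (x + t *s y)) M (x + t *s y) =
     bl (cv x) M x + t * bl (cv x) M y + cnj t * bl (cv y) M x + cnj t * t * bl (cv y) M y"
  by (simp add: bl_add1 bl_add3 bl_scale1 bl_scale3 algebra_simps)

lemma cnj_mult_self: "cnj t * t = complex_of_real ((cmod t)^2)"
  by (metis complex_norm_square mult.commute of_real_power)

lemma Re_cnj_swap: "Re (t * cnj b) = Re (cnj t * b)"
  by simp

lemma psd_CS:
  assumes "psd M"
  shows "(cmod (bl (cv y) M x))^2 \<le> Re (bl (cv y) M y) * Re (bl (cv x) M x)"
proof -
  define b where "b = bl (cv y) M x"
  define qx where "qx = Re (bl (cv x) M x)"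
  define qy where "qy = Re (bl (cv y) M y)"
  have H: "hermitian M" using assms psd_herm by blast
  have bx: "bl (cv x) M y = cnj b" unfolding b_def by (rule bl_herm[OF H])
  have qxe: "bl (cv x) M x = of_real qx" using q_real[OF H, of x] qx_def by (simp add: complex_eq_iff)
  have qye: "bl (cv y) M y = of_real qy" using q_real[OF H, of y] qy_def by (simp add: complex_eq_iff)
  have key: "0 \<le> qx + 2 * Re (cnj t * b) + (cmod t)^2 * qy" for t
  proof -
    have "0 \<le> Re (bl (cv (x + t *s y)) M (x + t *s y))" by (rule psd_q[OF assms])
    also have "bl (cv (x + t *s y)) M (x + t *s y) = of_real qx + t * cnj b + cnj t * b + of_real ((cmod t)^2) * of_real qy"
      unfolding q_expand qxe qye bx b_def[symmetric] cnj_mult_self by simp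
    also have "Re \<dots> = qx + Re (t * cnj b) + Re (cnj t * b) + (cmod t)^2 * qy"
      by (simp only: plus_complex.sel Re_complex_of_real flip: of_real_mult)
    also have "\<dots> = qx + 2 * Re (cnj t * b) + (cmod t)^2 * qy"
      unfolding Re_cnj_swap by simp
    finally show ?thesis .
  qed
  have qy0: "0 \<le> qy" using psd_q[OF assms] qy_def by simp
  have qx0: "0 \<le> qx" using psd_q[OF assms] qx_def by simp
  define nb where "nb = cmod b"
  have key2: "0 \<le> qx - 2 * k * nb^2 + k^2 * nb^2 * qy" if "k \<ge> 0" for k :: real
  proof -
    have "0 \<le> qx + 2 * Re (cnj (- of_real k * b) * b) + (cmod (- of_real k * b))^2 * qy"
      by (rule key)
    also have "cnj (- of_real k * b) * b = - of_real k * (cnj b * b)" by simp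
    also have "cnj b * b = of_real (nb^2)" unfolding nb_def by (rule cnj_mult_self)
    also have "cmod (- of_real k * b) = k * nb" using that by (simp add: norm_mult nb_def)
    finally show ?thesis by (simp add: power_mult_distrib algebra_simps)
  qed
  show ?thesis
  proof (cases "qy > 0")
    case True
    have "0 \<le> qx - 2 * (1/qy) * nb^2 + (1/qy)^2 * nb^2 * qy"
      by (rule key2) (use True in simp)
    also have "\<dots> = qx - nb^2 / qy" using True by (simp add: power2_eq_square field_simps)
    finally have "nb^2 / qy \<le> qx" by simp
    hence "nb^2 \<le> qx * qy" using True by (simp add: divide_le_eq)
    thus ?thesis by (simp add: nb_def b_def qx_def qy_def mult.commute)
  next
    case False
    hence qyz: "qy = 0" using qy0 by simp
    have "nb = 0"
    proof (rule ccontr)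
      assume bn: "nb \<noteq> 0"
      define k where "k = (qx + 1) / (2 * nb^2)"
      have kp: "k \<ge> 0" using bn qx0 by (simp add: k_def)
      have "0 \<le> qx - 2 * k * nb^2 + k^2 * nb^2 * qy" by (rule key2[OF kp])
      also have "\<dots> = -1" using bn qyz by (simp add: k_def field_simps)
      finally show False by simp
    qed
    thus ?thesis by (simp add: nb_def b_def qy_def[symmetric] qyz)
  qed
qed

lemma psd_q0:
  assumes "psd M" "bl (cv x) M x = 0"
  shows "M *v x = 0"
proof -
  have "(M *v x) $ i = 0" for i
  proof -
    have "(cmod (bl (cv (ev i)) M x))^2 \<le> Re (bl (cv (ev i)) M (ev i)) * Re (bl (cv x) M x)"
      by (rule psd_CS[OF assms(1)])
    hence "cmod (bl (cv (ev i)) M x) = 0" using assms(2) by simp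
    moreover have "cv (ev i) = ev i" by (simp add: ev_def vec_eq_iff)
    ultimately show ?thesis by (simp add: bl_ev1)
  qed
  thus ?thesis by (simp add: vec_eq_iff)
qed



definition outer :: "complex^'n \<Rightarrow> complex^'n^'n" where
  "outer v = (\<chi> i k. v$i * cnj (v$k))"

lemma trace_outer: "trace (outer v ** X) = bl (cv v) X v"
  unfolding trace_def bl_def outer_def matrix_matrix_mult_def
  apply (simp add: sum_distrib_left)
  apply (subst sum.swap)
  apply (rule sum.cong, simp)+
  by (simp add: algebra_simps)

lemma cv_ev[simp]: "cv (ev j) = ev j" by (simp add: ev_def vec_eq_iff)

lemma psd_diag: "bl (cv (ev j)) M (ev j) = M$j$j"
  by (simp add: bl_ev_ev)

lemma psd_decomp: "psd (M::complex^'n^'n) \<Longrightarrow> \<exists>vs. M = sum_list (map outer vs)"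
proof (induction "card {j. \<exists>i. M$i$j \<noteq> 0}" arbitrary: M rule: less_induct)
  case less
  show ?case
  proof (cases "M = 0")
    case True
    then show ?thesis by (intro exI[of _ "[]"]) simp
  next
    case False
    then obtain i j where ij: "M$i$j \<noteq> 0" by (auto simp: vec_eq_iff)
    have H: "hermitian M" using less.prems psd_herm by blast
    have mj: "M$j$j \<noteq> 0"
    proof
      assume "M$j$j = 0"
      hence "bl (cv (ev j)) M (ev j) = 0" by (simp add: bl_ev_ev)
      hence "M *v ev j = 0" by (rule psd_q0[OF less.prems])
      hence "(M *v ev j)$i = 0" by simp
      thus False using ij bl_ev1[of i M "ev j"] bl_ev_ev[of i M j] by simp
    qed
    define m where "m = Re (M$j$j)"
    have mre: "M$j$j = of_real m"
      using q_real[OF H, of "ev j"] bl_ev_ev[of j M j] by (simp add: m_def complex_eq_iff)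
    have m0: "0 \<le> m" using psd_q[OF less.prems, of "ev j"] bl_ev_ev[of j M j] unfolding m_def by simp
    have "m \<noteq> 0" using mj mre by auto
    hence mpos: "m > 0" using m0 by simp
    define v where "v = (\<chi> i. M$i$j / of_real (sqrt m))"
    define M' where "M' = (\<chi> i k. M$i$k - M$i$j * M$j$k / M$j$j)"
    have Hc: "cnj (M$a$b) = M$b$a" for a b using H unfolding hermitian_def by (metis complex_cnj_cnj)
    have dec: "M = M' + outer v"
    proof -
      have "outer v $ a $ b = M$a$j * M$j$b / M$j$j" for a b
      proof -
        have "outer v $ a $ b = M$a$j * cnj (M$b$j) / (of_real (sqrt m) * of_real (sqrt m))"
          by (simp add: outer_def v_def)
        also have "\<dots> = M$a$j * M$j$b / M$j$j"
          using mpos by (simp add: Hc mre flip: of_real_mult)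
        finally show ?thesis .
      qed
      thus ?thesis by (simp add: vec_eq_iff M'_def)
    qed
    have HM': "hermitian M'"
      unfolding hermitian_def M'_def by (simp add: Hc mult.commute)
    have psdM': "psd M'"
      unfolding psd_def
    proof (intro conjI HM' allI)
      fix x :: "complex^'n"
      define b where "b = bl (cv (ev j)) M x"
      have "bl (cv x) M' x = bl (cv x) M x - cnj b * b / M$j$j"
      proof -
        have "bl (cv x) M' x = bl (cv x) M x - (\<Sum>a\<in>UNIV. \<Sum>c\<in>UNIV. cnj (x$a) * (M$a$j * M$j$c / M$j$j) * x$c)"
          unfolding bl_def M'_def by (simp add: algebra_simps sum_subtractf)
        also have "(\<Sum>a\<in>UNIV. \<Sum>c\<in>UNIV. cnj (x$a) * (M$a$j * M$j$c / M$j$j) * x$c)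
             = (\<Sum>a\<in>UNIV. cnj (x$a) * M$a$j) * (\<Sum>c\<in>UNIV. M$j$c * x$c) / M$j$j"
          by (simp add: sum_distrib_left sum_distrib_right sum_divide_distrib algebra_simps)
        also have "(\<Sum>c\<in>UNIV. M$j$c * x$c) = b"
          by (simp add: b_def bl_ev1 matrix_vector_mult_def)
        also have "(\<Sum>a\<in>UNIV. cnj (x$a) * M$a$j) = cnj b"
          by (simp add: b_def bl_ev1 matrix_vector_mult_def cnj_sum Hc mult.commute)
        finally show ?thesis .
      qed
      hence "Re (bl (cv x) M' x) = Re (bl (cv x) M x) - (cmod b)^2 / m"
        by (simp add: mre complex_mult_cnj cmod_power2 flip: of_real_divide)
           (simp add: power2_eq_square)
      moreover have "(cmod b)^2 \<le> m * Re (bl (cv x) M x)"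
        using psd_CS[OF less.prems, of "ev j" x] bl_ev_ev[of j M j] mre by (simp add: b_def)
      ultimately have "0 \<le> Re (bl (cv x) M' x)" using mpos
        by (simp add: divide_le_eq mult.commute)
      thus "0 \<le> Re (\<Sum>i\<in>UNIV. \<Sum>j\<in>UNIV. cnj (x $ i) * M' $ i $ j * x $ j)"
        by (simp add: bl_def)
    qed
    have sub: "{k. \<exists>i. M'$i$k \<noteq> 0} \<subseteq> {k. \<exists>i. M$i$k \<noteq> 0} - {j}"
    proof
      fix k assume "k \<in> {k. \<exists>i. M'$i$k \<noteq> 0}"
      then obtain a where a: "M'$a$k \<noteq> 0" by auto
      have "k \<noteq> j" using a mj by (auto simp: M'_def)
      moreover have "\<exists>i. M$i$k \<noteq> 0"
      proof (rule ccontr)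
        assume "\<not> ?thesis"
        hence "M$a$k = 0" "M$j$k = 0" by auto
        thus False using a by (simp add: M'_def)
      qed
      ultimately show "k \<in> {k. \<exists>i. M$i$k \<noteq> 0} - {j}" by simp
    qed
    have "card {k. \<exists>i. M'$i$k \<noteq> 0} < card {j. \<exists>i. M$i$j \<noteq> 0}"
    proof -
      have "card {k. \<exists>i. M'$i$k \<noteq> 0} \<le> card ({k. \<exists>i. M$i$k \<noteq> 0} - {j})"
        by (rule card_mono[OF _ sub]) simp
      also have "\<dots> < card {j. \<exists>i. M$i$j \<noteq> 0}"
        using ij by (intro card_Diff1_less) auto
      finally show ?thesis .
    qed
    then obtain vs where "M' = sum_list (map outer vs)" using less.hyps psdM' by blast
    thus ?thesis using dec by (intro exI[of _ "v # vs"]) (simp add: add.commute)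
  qed
qed



context finite_dimensional_vector_space_pair
begin

lemma rank_nullity_le:
  assumes lf: "Vector_Spaces.linear s1 s2 f" and S: "vs1.subspace S"
  shows "vs1.dim S \<le> vs1.dim (S \<inter> {x. f x = 0}) + vs2.dim (f ` S)"
proof -
  obtain B where B: "B \<subseteq> S \<inter> {x. f x = 0}" "vs1.independent B"
      "S \<inter> {x. f x = 0} \<subseteq> vs1.span B" "card B = vs1.dim (S \<inter> {x. f x = 0})"
    using vs1.basis_exists by blast
  obtain C where C: "B \<subseteq> C" "C \<subseteq> S" "vs1.independent C" "S \<subseteq> vs1.span C"
    using vs1.maximal_independent_subset_extend[of B S] B by blast
  have fC: "finite C" using C(3) vs1.finiteI_independent by blast
  have cC: "card C = vs1.dim S" using vs1.basis_card_eq_dim C by blast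
  have fB: "finite B" using C(1) fC finite_subset by blast
  have mh: "module_hom s1 s2 f" using lf linear_iff_module_hom by blast
  define D where "D = C - B"
  have indD: "vs1.independent D" unfolding D_def using vs1.independent_mono[OF C(3)] by blast
  have CBD: "C = B \<union> D" using C(1) by (auto simp: D_def)
  have fD: "finite D" using fC D_def by simp
  have BD: "B \<inter> D = {}" using D_def by blast
  have cD: "card C = card B + card D"
    using card_Un_disjoint[OF fB fD BD] CBD by simp
  have disj: "vs1.span B \<inter> vs1.span D \<subseteq> {0}"
  proof -
    have "vs1.dim {x + y |x y. x \<in> vs1.span B \<and> y \<in> vs1.span D} + vs1.dim (vs1.span B \<inter> vs1.span D)
          = vs1.dim (vs1.span B) + vs1.dim (vs1.span D)"
      by (rule vs1.dim_sums_Int) (simp_all add: vs1.subspace_span)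
    moreover have "{x + y |x y. x \<in> vs1.span B \<and> y \<in> vs1.span D} = vs1.span C"
      unfolding CBD by (simp add: vs1.span_Un)
    moreover have "vs1.dim (vs1.span C) = card C" using C(3) vs1.dim_span_eq_card_independent by blast
    moreover have "vs1.dim (vs1.span B) = card B" using B(2) vs1.dim_span_eq_card_independent by blast
    moreover have "vs1.dim (vs1.span D) = card D" using indD vs1.dim_span_eq_card_independent by blast
    ultimately have "vs1.dim (vs1.span B \<inter> vs1.span D) = 0" using cD by simp
    thus ?thesis by simp
  qed
  have inj: "inj_on f (vs1.span D)"
  proof -
    have "\<forall>x\<in>vs1.span D. f x = 0 \<longrightarrow> x = 0"
    proof (intro ballI impI)
      fix x assume x: "x \<in> vs1.span D" "f x = 0"
      have "D \<subseteq> S" using C(2) D_def by blast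
      hence "x \<in> S" using x(1) S vs1.span_minimal by blast
      hence "x \<in> vs1.span B" using x(2) B(3) by blast
      thus "x = 0" using disj x(1) by blast
    qed
    thus ?thesis using module_hom.inj_on_iff_eq_0[OF mh vs1.subspace_span] by blast
  qed
  have indfD: "vs2.independent (f ` D)"
    by (rule module_hom.independent_injective_image[OF mh indD inj])
  have "card D = card (f ` D)"
    using inj vs1.span_superset by (intro card_image[symmetric]) (rule inj_on_subset, auto)
  also have "\<dots> = vs2.dim (f ` D)" using indfD vs2.dim_eq_card_independent by simp
  also have "\<dots> \<le> vs2.dim (f ` S)"
    by (rule vs2.dim_subset) (use C(2) D_def in blast)
  finally show ?thesis using cC cD B(4) by linarith
qed

end

context finite_dimensional_vector_space
begin

lemma dim_kernels:
  assumes "finite P" "subspace S" "\<And>p. p \<in> P \<Longrightarrow> Vector_Spaces.linear scale ((*) :: 'a \<Rightarrow> 'a \<Rightarrow> 'a) (g p)"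
  shows "dim S \<le> dim (S \<inter> {x. \<forall>p\<in>P. g p x = 0}) + card P"
  using assms(1,3)
proof (induction P rule: finite_induct)
  case empty
  then show ?case by simp
next
  case (insert p P)
  interpret pr: finite_dimensional_vector_space_pair scale Basis "(*) :: 'a \<Rightarrow> 'a \<Rightarrow> 'a" "{1}"
    by (intro finite_dimensional_vector_space_pair.intro finite_dimensional_vector_space_axioms
        vector_space_over_itself.finite_dimensional_vector_space_axioms)
  define S' where "S' = S \<inter> {x. \<forall>q\<in>P. g q x = 0}"
  have lin: "\<And>q. q \<in> insert p P \<Longrightarrow> module_hom scale (*) (g q)"
    using insert.prems linear_iff_module_hom by blast
  have sub: "subspace {x. \<forall>q\<in>P. g q x = 0}"
    unfolding subspace_def
    using module_hom.add[OF lin] module_hom.scale[OF lin] module_hom.zero[OF lin] by auto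
  have S': "subspace S'" unfolding S'_def by (rule subspace_inter[OF assms(2) sub])
  have "dim S' \<le> dim (S' \<inter> {x. g p x = 0}) + vector_space_over_itself.dim (g p ` S')"
    by (rule pr.rank_nullity_le[OF insert.prems[of p] S']) simp
  also have "vector_space_over_itself.dim (g p ` S') \<le> 1"
    using vector_space_over_itself.dim_subset_UNIV[of "g p ` S'"]
    by (simp add: vector_space_over_itself.dimension_def)
  also have "S' \<inter> {x. g p x = 0} = S \<inter> {x. \<forall>q\<in>insert p P. g q x = 0}"
    unfolding S'_def by auto
  finally have a: "dim S' \<le> dim (S \<inter> {x. \<forall>q\<in>insert p P. g q x = 0}) + 1" by simp
  have b: "dim S \<le> dim S' + card P" unfolding S'_def using insert.IH insert.prems by auto
  show ?case using a b insert.hyps by simp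
qed

end

interpretation mat: vector_space "mscale :: complex \<Rightarrow> complex^'n^'m \<Rightarrow> complex^'n^'m"
  by unfold_locales (simp_all add: mscale_def vec_eq_iff algebra_simps)

lemma mscale_nth[simp]: "mscale c X $ i $ j = c * X$i$j" by (simp add: mscale_def)

lemma munit_nth: "munit i j $ a $ b = (if a = i \<and> b = j then 1 else 0)"
  by (simp add: munit_def)

lemma munit_inj: "munit i j = munit k l \<longleftrightarrow> i = k \<and> j = l"
proof
  assume "munit i j = munit k l"
  hence "munit i j $ i $ j = munit k l $ i $ j" by simp
  thus "i = k \<and> j = l" by (simp add: munit_nth split: if_splits)
qed simp

definition mbasis :: "(complex^'n^'n) set" where
  "mbasis = (\<lambda>(i,j). munit i j) ` UNIV"

lemma finite_mbasis: "finite mbasis" by (simp add: mbasis_def)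

lemma card_mbasis: "card (mbasis :: (complex^'n^'n) set) = CARD('n) * CARD('n)"
proof -
  have "inj (\<lambda>(i,j). munit i j :: complex^'n^'n)"
    by (auto simp: inj_on_def munit_inj)
  hence "card (mbasis :: (complex^'n^'n) set) = card (UNIV :: ('n \<times> 'n) set)"
    unfolding mbasis_def by (rule card_image)
  thus ?thesis by (simp add: card_cartesian_product)
qed

lemma mbasis_entry:
  assumes "v \<in> mbasis"
  shows "v $ a $ b = (if v = munit a b then 1 else 0)"
  using assms by (auto simp: mbasis_def munit_nth munit_inj)

lemma matrix_expand: "X = (\<Sum>(i,j)\<in>UNIV. mscale (X$i$j) (munit i j))"
proof -
  have "(\<Sum>(i,j)\<in>UNIV. mscale (X$i$j) (munit i j)) $ a $ b = X$a$b" for a b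
  proof -
    have "(\<Sum>(i,j)\<in>UNIV. mscale (X$i$j) (munit i j)) $ a $ b
        = (\<Sum>p\<in>UNIV. (case p of (i,j) \<Rightarrow> X$i$j * (if a = i \<and> b = j then 1 else 0)))"
      by (simp add: sum_component case_prod_unfold munit_nth)
    also have "\<dots> = (\<Sum>p\<in>UNIV. if p = (a,b) then X$a$b else 0)"
      by (rule sum.cong) (auto split: if_splits)
    also have "\<dots> = X$a$b" by simp
    finally show ?thesis .
  qed
  thus ?thesis by (simp add: vec_eq_iff)
qed

interpretation matf: finite_dimensional_vector_space "mscale :: complex \<Rightarrow> complex^'n^'n \<Rightarrow> complex^'n^'n" mbasis
proof unfold_locales
  show "finite (mbasis :: (complex^'n^'n) set)" by (rule finite_mbasis)
  show "\<not> mat.dependent (mbasis :: (complex^'n^'n) set)"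
  proof
    assume "mat.dependent (mbasis :: (complex^'n^'n) set)"
    then obtain u where u: "\<exists>v\<in>mbasis. u v \<noteq> 0" "(\<Sum>v\<in>mbasis. mscale (u v) v) = (0::complex^'n^'n)"
      using mat.dependent_finite[OF finite_mbasis] by blast
    then obtain v where v: "v \<in> mbasis" "u v \<noteq> 0" by blast
    then obtain a b where ab: "v = munit a b" by (auto simp: mbasis_def)
    have "(\<Sum>w\<in>mbasis. mscale (u w) w) $ a $ b = (\<Sum>w\<in>(mbasis::(complex^'n^'n) set). if w = munit a b then u w else 0)"
      apply (simp add: sum_component)
      apply (rule sum.cong)
       apply (auto simp: mbasis_entry)
      done
    also have "\<dots> = u v" using v ab by (simp add: sum.delta[OF finite_mbasis])
    finally show False using u(2) v(2) by simp
  qed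
  show "mat.span (mbasis :: (complex^'n^'n) set) = UNIV"
  proof (rule set_eqI, rule iffI)
    fix X :: "complex^'n^'n"
    have "X = (\<Sum>(i,j)\<in>UNIV. mscale (X$i$j) (munit i j))" by (rule matrix_expand)
    also have "\<dots> \<in> mat.span mbasis"
      unfolding case_prod_unfold
      by (intro mat.span_sum mat.span_scale mat.span_base) (auto simp: mbasis_def)
    finally show "X \<in> mat.span mbasis" .
  qed simp
qed

lemma matf_dim_UNIV: "mat.dim (UNIV :: (complex^'n^'n) set) = CARD('n) * CARD('n)"
  using matf.dim_UNIV card_mbasis by simp

lemma cdim_eq: "cdim S = mat.dim S" by (simp add: cdim_def)



interpretation matp: finite_dimensional_vector_space_pair
  "mscale :: complex \<Rightarrow> complex^'n^'n \<Rightarrow> complex^'n^'n" mbasis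
  "mscale :: complex \<Rightarrow> complex^'n^'n \<Rightarrow> complex^'n^'n" mbasis
  by unfold_locales

lemma bl_mv: "bl u X w = (\<Sum>i\<in>UNIV. u$i * (X *v w)$i)"
  by (simp add: bl_def matrix_vector_mult_def sum_distrib_left mult.assoc)

lemma bl_tr: "bl u X w = (\<Sum>j\<in>UNIV. (transpose X *v u)$j * w$j)"
proof -
  have "(\<Sum>j\<in>UNIV. (transpose X *v u)$j * w$j) = (\<Sum>j\<in>UNIV. \<Sum>i\<in>UNIV. u$i * X$i$j * w$j)"
    unfolding matrix_vector_mult_def transpose_def by (simp add: sum_distrib_right sum_distrib_left mult_ac)
  also have "\<dots> = bl u X w" unfolding bl_def by (rule sum.swap)
  finally show ?thesis by simp
qed

lemma herm_c: "hermitian M \<Longrightarrow> cnj (M$a$b) = M$b$a"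
  unfolding hermitian_def by (metis complex_cnj_cnj)

lemma herm_tr: assumes "hermitian M" shows "transpose M *v x = cv (M *v cv x)"
  using herm_c[OF assms] by (simp add: vec_eq_iff matrix_vector_mult_def transpose_def cnj_sum)

lemma hermitian_transpose: assumes "hermitian M" shows "hermitian (transpose M)"
  unfolding hermitian_def transpose_def using herm_c[OF assms] by simp

lemma cv_span: "x \<in> vec.span S \<Longrightarrow> cv x \<in> vec.span (cv ` S)"
proof -
  assume x: "x \<in> vec.span S"
  have "vec.subspace {x. cv x \<in> vec.span (cv ` S)}"
    unfolding vec.subspace_def
    by (auto intro: vec.span_add vec.span_scale simp: vec.span_zero)
  moreover have "S \<subseteq> {x. cv x \<in> vec.span (cv ` S)}" by (auto intro: vec.span_base)
  ultimately show ?thesis using x vec.span_minimal by blast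
qed

lemma dim_cv_le: "vec.dim (cv ` S) \<le> vec.dim (S :: (complex^'n) set)"
proof -
  obtain B where B: "B \<subseteq> S" "vec.independent B" "S \<subseteq> vec.span B" "card B = vec.dim S"
    using vec.basis_exists by blast
  have fB: "finite B" using B(2) vec.finiteI_independent by blast
  have "cv ` S \<subseteq> vec.span (cv ` B)" using B(3) cv_span by blast
  hence "vec.dim (cv ` S) \<le> card (cv ` B)" by (rule vec.dim_le_card) (use fB in simp)
  also have "\<dots> \<le> card B" using fB card_image_le by blast
  finally show ?thesis using B(4) by simp
qed

lemma dim_cv: "vec.dim (cv ` S) = vec.dim (S :: (complex^'n) set)"
proof -
  have "cv ` cv ` S = S" by (force simp: image_image)
  thus ?thesis using dim_cv_le[of S] dim_cv_le[of "cv ` S"] by simp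
qed

lemma columns_herm: "hermitian M \<Longrightarrow> columns M = cv ` rows M"
  unfolding columns_def rows_def
  by (auto simp: column_def row_def vec_eq_iff herm_c image_def)

lemma column_ev: "column k M = M *v ev k"
  by (simp add: vec_eq_iff column_def matrix_vector_mult_def ev_def if_distrib cong: if_cong)

lemma span_columns: "vec.span (columns M) = (\<lambda>x. M *v x) ` vec.span (range ev)"
proof -
  have "columns M = (\<lambda>x. M *v x) ` range ev"
    unfolding columns_def by (auto simp: column_ev)
  thus ?thesis by (simp add: vec.span_image)
qed

lemma cnj_self_nonneg: "0 \<le> cnj z * z"
  by (simp add: less_eq_complex_def)

lemma herm_null_range:
  assumes H: "hermitian M" and x: "M *v x = 0" "x \<in> vec.span (columns M)"
  shows "x = 0"
proof -
  obtain y where y: "x = M *v y" using x(2) span_columns by blast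
  have "bl (cv y) M x = 0" by (simp add: bl_mv x(1))
  hence "bl (cv x) M y = 0" using bl_herm[OF H, of x y] by simp
  hence s: "(\<Sum>i\<in>UNIV. cnj (x$i) * x$i) = 0" by (simp add: bl_mv y[symmetric])
  have "\<forall>i\<in>UNIV. cnj (x$i) * x$i = 0"
    using s by (subst sum_nonneg_eq_0_iff[symmetric]) (auto simp: cnj_self_nonneg)
  thus ?thesis by (simp add: vec_eq_iff)
qed

lemma rank_herm_cols: "hermitian M \<Longrightarrow> vec.dim (vec.span (columns M)) = rank M"
  by (simp add: columns_herm dim_cv row_rank_def_gen)

lemma rank_transpose_herm: "hermitian M \<Longrightarrow> rank (transpose M) = rank M"
  using rank_herm_cols[of M] by (simp add: row_rank_def_gen)

lemma herm_decomp:
  fixes M :: "complex^'n^'n"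
  assumes H: "hermitian M"
  shows "vec.dim {x. M *v x = 0} + rank M = CARD('n)"
    and "\<exists>n w. z = n + w \<and> M *v n = 0 \<and> w \<in> vec.span (columns M)"
proof -
  let ?N = "{x. M *v x = 0}" and ?R = "vec.span (columns M)"
  have subN: "vec.subspace ?N"
    unfolding vec.subspace_def by (auto simp: matrix_vector_right_distrib vec.scale)
  have subR: "vec.subspace ?R" by (rule vec.subspace_span)
  have lin: "Vector_Spaces.linear (*s) (*s) (\<lambda>x. M *v x)"
    by (rule vec.linear_axioms)
  have "vec.dim (UNIV :: (complex^'n) set) \<le> vec.dim (UNIV \<inter> ?N) + vec.dim (range (\<lambda>x. M *v x))"
    using vec.rank_nullity_le[OF lin vec.subspace_UNIV] by simp
  also have "vec.dim (range (\<lambda>x. M *v x)) \<le> vec.dim ?R"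
    by (rule vec.dim_subset) (auto intro: matrix_vector_mult_in_columnspace_gen)
  finally have ge: "CARD('n) \<le> vec.dim ?N + vec.dim ?R" by (simp add: vec_dim_card card_cart_basis)
  have int: "?N \<inter> ?R = {0}"
    using herm_null_range[OF H] by (auto simp: vec.span_zero)
  have sums: "vec.dim {x + y |x y. x \<in> ?N \<and> y \<in> ?R} + vec.dim (?N \<inter> ?R) = vec.dim ?N + vec.dim ?R"
    by (rule vec.dim_sums_Int[OF subN subR])
  have le: "vec.dim {x + y |x y. x \<in> ?N \<and> y \<in> ?R} \<le> CARD('n)"
    by (rule dim_subset_UNIV_cart_gen)
  have eq: "vec.dim ?N + vec.dim ?R = CARD('n)" using ge sums le int by simp
  thus "vec.dim ?N + rank M = CARD('n)" using rank_herm_cols[OF H] by simp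
  have sub: "vec.subspace {x + y |x y. x \<in> ?N \<and> y \<in> ?R}"
    by (rule vec.subspace_sums[OF subN subR])
  have "{x + y |x y. x \<in> ?N \<and> y \<in> ?R} = UNIV"
    by (rule vec.subspace_dim_equal[OF sub vec.subspace_UNIV])
      (use sums int eq in \<open>simp_all add: vec_dim_card card_cart_basis\<close>)
  thus "\<exists>n w. z = n + w \<and> M *v n = 0 \<and> w \<in> ?R" by blast
qed

definition CS :: "(complex^'n) set \<Rightarrow> (complex^'n) set \<Rightarrow> (complex^'n^'n) set" where
  "CS K1 K2 = {X. \<forall>u\<in>K1. \<forall>w\<in>K2. bl u X w = 0}"

lemma bl_linear: "Vector_Spaces.linear mscale (*) (\<lambda>X. bl u X w)"
  by (auto simp: linear_iff_module_hom module_hom_iff mat.module_axioms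
      vector_space_over_itself.module_axioms bl_add2 bl_scale2)

lemma CS_subspace: "mat.subspace (CS K1 K2)"
  unfolding mat.subspace_def CS_def
  by (auto simp: bl_add2 bl_scale2 mscale_def[symmetric])

lemma CS_dim:
  assumes "finite K1" "finite K2"
  shows "CARD('n) * CARD('n) \<le> mat.dim (CS K1 K2 :: (complex^'n^'n) set) + card K1 * card K2"
proof -
  have "mat.dim (UNIV :: (complex^'n^'n) set) \<le>
      mat.dim (UNIV \<inter> {X. \<forall>p\<in>K1 \<times> K2. (\<lambda>(u,w) X. bl u X w) p X = 0}) + card (K1 \<times> K2)"
    by (rule matf.dim_kernels) (use assms in \<open>auto simp: bl_linear mat.subspace_UNIV\<close>)
  moreover have "UNIV \<inter> {X. \<forall>p\<in>K1 \<times> K2. (\<lambda>(u,w) X. bl u X w) p X = 0} = CS K1 K2"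
    by (auto simp: CS_def)
  ultimately show ?thesis by (simp add: matf_dim_UNIV card_cartesian_product card_mbasis)
qed

lemma CS_span:
  assumes X: "X \<in> CS K1 K2" and u: "u \<in> vec.span K1" and w: "w \<in> vec.span K2"
  shows "bl u X w = 0"
proof -
  have s2: "vec.subspace {w. \<forall>u\<in>K1. bl u X w = 0}"
    unfolding vec.subspace_def by (auto simp: bl_add3 bl_scale3)
  have "K2 \<subseteq> {w. \<forall>u\<in>K1. bl u X w = 0}" using X by (auto simp: CS_def)
  hence w': "\<forall>u\<in>K1. bl u X w = 0" using vec.span_minimal[OF _ s2] w by blast
  have s1: "vec.subspace {u. bl u X w = 0}"
    unfolding vec.subspace_def by (auto simp: bl_add1 bl_scale1)
  have "K1 \<subseteq> {u. bl u X w = 0}" using w' by auto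
  thus ?thesis using vec.span_minimal[OF _ s1] u by blast
qed



lemma matrix_add_rdistrib': "(B + C) ** X = B ** X + C ** (X::complex^'n^'n)"
  by (simp add: matrix_matrix_mult_def vec_eq_iff distrib_right sum.distrib)

lemma mv_add: "(X + Y) *v v = X *v v + Y *v (v::complex^'n)"
  by (simp add: matrix_vector_mult_def vec_eq_iff sum.distrib algebra_simps)

lemma mv_mscale: "mscale c X *v v = c *s (X *v (v::complex^'n))"
  by (simp add: matrix_vector_mult_def vec_eq_iff sum_distrib_left mult.assoc)

lemma tr_add: "transpose (X + Y) = transpose X + transpose (Y::complex^'n^'n)"
  by (simp add: transpose_def vec_eq_iff)

lemma tr_mscale: "transpose (mscale c X) = mscale c (transpose (X::complex^'n^'n))"
  by (simp add: transpose_def vec_eq_iff)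

lemma trace_outer_list:
  "trace (sum_list (map outer vs) ** X) = sum_list (map (\<lambda>v. bl (cv v) X v) vs)"
proof (induction vs)
  case Nil
  have "(0::complex^'a^'a) ** X = 0" by (simp add: matrix_matrix_mult_def vec_eq_iff)
  then show ?case by (simp add: trace_def)
next
  case (Cons v vs)
  have "sum_list (map outer (v # vs)) ** X = outer v ** X + sum_list (map outer vs) ** X"
    by (simp only: list.map sum_list.Cons matrix_add_rdistrib')
  hence "trace (sum_list (map outer (v # vs)) ** X) = trace (outer v ** X) + trace (sum_list (map outer vs) ** X)"
    by (simp only: trace_add)
  also have "\<dots> = bl (cv v) X v + sum_list (map (\<lambda>v. bl (cv v) X v) vs)"
    by (simp only: trace_outer Cons.IH)
  finally show ?case by simp
qed

lemma sum_list_map_zero: "\<forall>v\<in>set vs. f v = (0::complex) \<Longrightarrow> sum_list (map f vs) = 0"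
  by (induction vs) auto

lemma sum_list_nonneg_zero:
  fixes f :: "'a \<Rightarrow> complex"
  assumes "\<forall>v\<in>set vs. 0 \<le> f v" "sum_list (map f vs) = 0"
  shows "\<forall>v\<in>set vs. f v = 0"
proof -
  have "\<And>x. x \<in> set (map f vs) \<Longrightarrow> 0 \<le> x" using assms(1) by auto
  hence "\<forall>x\<in>set (map f vs). x = 0" using sum_list_nonneg_eq_0_iff assms(2) by blast
  thus ?thesis by auto
qed

lemma trace_psd:
  assumes E: "psd (E :: complex^'n^'n)" and A: "psd A"
  shows "0 \<le> trace (E ** A)"
    and "trace (E ** A) = 0 \<Longrightarrow> \<exists>vs. E = sum_list (map outer vs) \<and> (\<forall>v\<in>set vs. A *v v = 0)"
proof -
  obtain vs where vs: "E = sum_list (map outer vs)" using psd_decomp[OF E] by blast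
  have tr: "trace (E ** A) = sum_list (map (\<lambda>v. bl (cv v) A v) vs)"
    using vs trace_outer_list by simp
  have nn: "\<forall>v\<in>set vs. 0 \<le> bl (cv v) A v" using psd_q_ge[OF A] by blast
  show "0 \<le> trace (E ** A)" unfolding tr by (rule sum_list_nonneg) (use nn in auto)
  assume "trace (E ** A) = 0"
  hence "\<forall>v\<in>set vs. bl (cv v) A v = 0" using sum_list_nonneg_zero[OF nn] tr by simp
  hence "\<forall>v\<in>set vs. A *v v = 0" using psd_q0[OF A] by blast
  thus "\<exists>vs. E = sum_list (map outer vs) \<and> (\<forall>v\<in>set vs. A *v v = 0)" using vs by blast
qed

lemma bl_sum: "bl u (sum f I) w = (\<Sum>i\<in>I. bl u (f i) w)"
proof (cases "finite I")
  case True
  then show ?thesis by (induction I rule: finite_induct) (simp_all add: bl_add2)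
qed simp

lemma cv_eq0: "cv x = 0 \<Longrightarrow> x = 0"
  by (metis cv_0 cv_cv)

lemma nonneg_cnj: "0 \<le> (t::complex) \<Longrightarrow> cnj t = t"
  by (simp add: less_eq_complex_def complex_eq_iff)

theorem mainTheorem4:
  fixes \<phi> :: "complex^'n^'n \<Rightarrow> complex^'n^'n"
    and A :: "complex^'n^'n"
  assumes "entanglement_breaking \<phi>"
    and "psd A"
    and "rank A < CARD('n)"
    and "(rank A)^2 + (rank (\<phi> A))^2 < 2 * CARD('n) * rank A"
  shows "int (cdim {X. \<phi> X = 0}) \<ge> 2 * int CARD('n) * int (rank A) - int (rank A)^2 - int (rank (\<phi> A))^2
    \<and> 2 * int CARD('n) * int (rank A) - int (rank A)^2 - int (rank (\<phi> A))^2 > 0"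
proof -
  obtain I \<rho> E where I: "finite (I::nat set)" "\<forall>i\<in>I. density (\<rho> i) \<and> psd (E i)"
      and phi: "\<forall>X. \<phi> X = (\<Sum>i\<in>I. mscale (trace (E i ** X)) (\<rho> i))"
      and qc: "quantum_channel \<phi>"
    using assms(1) unfolding entanglement_breaking_def by blast
  have cl: "clinear_map \<phi>" using qc by (simp add: quantum_channel_def)
  have psdE: "psd (E i)" if "i \<in> I" for i using I that by blast
  have psdR: "psd (\<rho> i)" if "i \<in> I" for i using I that by (simp add: density_def)
  define d where "d = CARD('n)"
  define r where "r = rank A"
  define H where "H = \<phi> A"
  define s where "s = rank H"
  define t where "t = (\<lambda>i. trace (E i ** A))"
  have tnn: "0 \<le> t i" if "i \<in> I" for i unfolding t_def by (rule trace_psd(1)[OF psdE[OF that] assms(2)])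
  have HA: "hermitian A" using assms(2) psd_herm by blast
  have Hdef: "H = (\<Sum>i\<in>I. mscale (t i) (\<rho> i))" using phi by (simp add: H_def t_def)
  have HH: "hermitian H"
    unfolding hermitian_def
  proof (intro allI)
    fix a b
    have "cnj (H$b$a) = (\<Sum>i\<in>I. cnj (t i) * cnj (\<rho> i $ b $ a))"
      unfolding Hdef by (simp add: sum_component cnj_sum)
    also have "\<dots> = (\<Sum>i\<in>I. t i * \<rho> i $ a $ b)"
      by (rule sum.cong) (simp_all add: nonneg_cnj[OF tnn] herm_c[OF psd_herm[OF psdR]])
    also have "\<dots> = H$a$b" unfolding Hdef by (simp add: sum_component)
    finally show "H$a$b = cnj (H$b$a)" by simp
  qed
  let ?NA = "{x. A *v x = 0}" and ?NAT = "{x. transpose A *v x = 0}"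
  have dNA: "vec.dim ?NA + r = d" using herm_decomp(1)[OF HA] by (simp add: r_def d_def)
  have dNAT: "vec.dim ?NAT + r = d"
    using herm_decomp(1)[OF hermitian_transpose[OF HA]] rank_transpose_herm[OF HA]
    by (simp add: r_def d_def)
  obtain K2 where K2: "K2 \<subseteq> ?NA" "vec.independent K2" "?NA \<subseteq> vec.span K2" "card K2 = vec.dim ?NA"
    using vec.basis_exists by blast
  obtain K1 where K1: "K1 \<subseteq> ?NAT" "vec.independent K1" "?NAT \<subseteq> vec.span K1" "card K1 = vec.dim ?NAT"
    using vec.basis_exists by blast
  have fK1: "finite K1" using K1(2) vec.finiteI_independent by blast
  have fK2: "finite K2" using K2(2) vec.finiteI_independent by blast
  define V where "V = CS K1 K2"
  have c1: "card K1 = d - r" using K1(4) dNAT by simp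
  have c2: "card K2 = d - r" using K2(4) dNA by simp
  have dimV: "d * d \<le> mat.dim V + (d - r) * (d - r)"
    using CS_dim[OF fK1 fK2] unfolding c1 c2 by (simp add: V_def d_def)
  have subV: "mat.subspace V" unfolding V_def by (rule CS_subspace)
  let ?R2 = "vec.span (columns H)" and ?R1 = "vec.span (columns (transpose H))"
  have dR2: "vec.dim ?R2 = s" using rank_herm_cols[OF HH] by (simp add: s_def)
  have dR1: "vec.dim ?R1 = s"
    using rank_herm_cols[OF hermitian_transpose[OF HH]] rank_transpose_herm[OF HH] by (simp add: s_def)
  obtain L2 where L2: "L2 \<subseteq> ?R2" "vec.independent L2" "?R2 \<subseteq> vec.span L2" "card L2 = vec.dim ?R2"
    using vec.basis_exists by blast
  obtain L1 where L1: "L1 \<subseteq> ?R1" "vec.independent L1" "?R1 \<subseteq> vec.span L1" "card L1 = vec.dim ?R1"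
    using vec.basis_exists by blast
  have fL1: "finite L1" using L1(2) vec.finiteI_independent by blast
  have fL2: "finite L2" using L2(2) vec.finiteI_independent by blast
  define Z where "Z = CS L1 L2"
  have dimZ: "d * d \<le> mat.dim Z + s * s"
    using CS_dim[OF fL1 fL2] L1(4) L2(4) dR1 dR2 by (simp add: Z_def d_def)
  have subZ: "mat.subspace Z" unfolding Z_def by (rule CS_subspace)
  define U where "U = {Y. \<forall>v. H *v v = 0 \<longrightarrow> Y *v v = 0 \<and> transpose Y *v cv v = 0}"
  have U0: "0 \<in> U" by (simp add: U_def)
  have Uadd: "x + y \<in> U" if xy: "x \<in> U" "y \<in> U" for x y
    unfolding U_def mem_Collect_eq
  proof (intro allI impI)
    fix v assume v: "H *v v = 0"
    have a: "x *v v = 0" "transpose x *v cv v = 0" "y *v v = 0" "transpose y *v cv v = 0"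
      using xy v unfolding U_def by blast+
    show "(x + y) *v v = 0 \<and> transpose (x + y) *v cv v = 0"
      unfolding mv_add tr_add a by simp
  qed
  have Uscale: "mscale c x \<in> U" if x: "x \<in> U" for c x
    unfolding U_def mem_Collect_eq
  proof (intro allI impI)
    fix v assume v: "H *v v = 0"
    have a: "x *v v = 0" "transpose x *v cv v = 0"
      using x v unfolding U_def by blast+
    show "mscale c x *v v = 0 \<and> transpose (mscale c x) *v cv v = 0"
      unfolding mv_mscale tr_mscale a by simp
  qed
  have subU: "mat.subspace U"
    unfolding mat.subspace_def using U0 Uadd Uscale by blast
  have UZ: "U \<inter> Z \<subseteq> {0}"
  proof
    fix Y assume Y: "Y \<in> U \<inter> Z"
    have "Y$i$j = 0" for i j
    proof -
      obtain n w where nw: "ev j = n + w" "H *v n = 0" "w \<in> ?R2" using herm_decomp(2)[OF HH] by blast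
      obtain n' u where nu: "ev i = n' + u" "transpose H *v n' = 0" "u \<in> ?R1"
        using herm_decomp(2)[OF hermitian_transpose[OF HH]] by blast
      have w: "w \<in> vec.span L2" using nw(3) L2(3) by blast
      have u: "u \<in> vec.span L1" using nu(3) L1(3) by blast
      have Yn: "Y *v n = 0" using Y nw(2) unfolding U_def by blast
      have "cv (H *v cv n') = 0" using nu(2) herm_tr[OF HH] by simp
      hence "H *v cv n' = 0" by (rule cv_eq0)
      hence "transpose Y *v cv (cv n') = 0" using Y unfolding U_def by blast
      hence Yn': "transpose Y *v n' = 0" by (simp only: cv_cv)
      have "Y$i$j = bl (ev i) Y (ev j)" by (simp add: bl_ev_ev)
      also have "\<dots> = bl n' Y (n + w) + bl u Y n + bl u Y w"
        unfolding nu(1) nw(1) by (simp add: bl_add1 bl_add3)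
      also have "bl n' Y (n + w) = 0" by (simp only: bl_tr Yn') simp
      also have "bl u Y n = 0" by (simp add: bl_mv Yn)
      also have "bl u Y w = 0" using CS_span[OF _ u w] Y by (simp add: Z_def)
      finally show ?thesis by simp
    qed
    thus "Y \<in> {0}" by (simp add: vec_eq_iff)
  qed
  have dimU: "mat.dim U \<le> s * s"
  proof -
    have "mat.dim {x + y |x y. x \<in> U \<and> y \<in> Z} + mat.dim (U \<inter> Z) = mat.dim U + mat.dim Z"
      by (rule matf.dim_sums_Int[OF subU subZ])
    moreover have "mat.dim (U \<inter> Z) = 0" using UZ by simp
    moreover have "mat.dim {x + y |x y. x \<in> U \<and> y \<in> Z} \<le> d * d"
      using matf.dim_subset[of "{x + y |x y. x \<in> U \<and> y \<in> Z}" UNIV] matf_dim_UNIV[where 'n='n] by (simp add: d_def)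
    ultimately show ?thesis using dimZ by linarith
  qed
  have rhoU: "\<rho> i \<in> U" if i: "i \<in> I" "t i \<noteq> 0" for i
  proof -
    have "\<rho> i *v v = 0 \<and> transpose (\<rho> i) *v cv v = 0" if v: "H *v v = 0" for v
    proof -
      have "bl (cv v) H v = 0" by (simp add: bl_mv v)
      hence s0: "(\<Sum>k\<in>I. t k * bl (cv v) (\<rho> k) v) = 0" unfolding Hdef by (simp add: bl_sum bl_scale2)
      have "\<forall>k\<in>I. t k * bl (cv v) (\<rho> k) v = 0"
        using s0 by (subst sum_nonneg_eq_0_iff[OF I(1), symmetric])
          (auto intro!: mult_nonneg_nonneg tnn psd_q_ge psdR)
      hence "bl (cv v) (\<rho> i) v = 0" using i by auto
      hence a: "\<rho> i *v v = 0" by (rule psd_q0[OF psdR[OF i(1)]])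
      have "transpose (\<rho> i) *v cv v = cv (\<rho> i *v v)"
        using herm_tr[OF psd_herm[OF psdR[OF i(1)]]] by simp
      thus ?thesis using a by simp
    qed
    thus ?thesis by (simp add: U_def)
  qed
  have phiVU: "\<phi> ` V \<subseteq> U"
  proof
    fix Y assume "Y \<in> \<phi> ` V"
    then obtain X where X: "X \<in> V" "Y = \<phi> X" by blast
    have "(\<Sum>i\<in>I. mscale (trace (E i ** X)) (\<rho> i)) \<in> U"
    proof (rule mat.subspace_sum[OF subU])
      fix i assume i: "i \<in> I"
      show "mscale (trace (E i ** X)) (\<rho> i) \<in> U"
      proof (cases "t i = 0")
        case False
        thus ?thesis using rhoU[OF i False] mat.subspace_scale[OF subU] by blast
      next
        case True
        then obtain vs where vs: "E i = sum_list (map outer vs)" "\<forall>v\<in>set vs. A *v v = 0"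
          using trace_psd(2)[OF psdE[OF i] assms(2)] by (auto simp: t_def)
        have "\<forall>v\<in>set vs. bl (cv v) X v = 0"
        proof
          fix v assume v: "v \<in> set vs"
          have Av: "A *v v = 0" using vs(2) v by blast
          have "transpose A *v cv v = 0" using herm_tr[OF HA] Av by simp
          hence "cv v \<in> vec.span K1" using K1(3) by blast
          moreover have "v \<in> vec.span K2" using K2(3) Av by blast
          ultimately show "bl (cv v) X v = 0" using CS_span X(1) by (simp add: V_def)
        qed
        hence "trace (E i ** X) = 0" unfolding vs(1) trace_outer_list
          by (rule sum_list_map_zero)
        thus ?thesis using mat.subspace_0[OF subU] by (simp add: mscale_def vec_eq_iff flip: zero_vec_def)
      qed
    qed
    thus "Y \<in> U" using X phi by simp
  qed
  have lin: "Vector_Spaces.linear mscale mscale \<phi>"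
    using cl by (auto simp: linear_iff_module_hom module_hom_iff mat.module_axioms clinear_map_def)
  have "mat.dim V \<le> mat.dim (V \<inter> {x. \<phi> x = 0}) + mat.dim (\<phi> ` V)"
    by (rule matp.rank_nullity_le[OF lin subV])
  also have "mat.dim (V \<inter> {x. \<phi> x = 0}) \<le> mat.dim {x. \<phi> x = 0}"
    by (rule matf.dim_subset) blast
  also have "mat.dim (\<phi> ` V) \<le> mat.dim U" by (rule matf.dim_subset[OF phiVU])
  finally have key: "mat.dim V \<le> cdim {X. \<phi> X = 0} + s * s" using dimU by (simp add: cdim_eq)
  have rd: "r \<le> d" using dNA by simp
  have e1: "int ((d - r) * (d - r)) = (int d - int r) * (int d - int r)" using rd by (simp add: of_nat_diff)
  have "int (d * d) \<le> int (mat.dim V + (d - r) * (d - r))" using dimV by (simp only: of_nat_le_iff)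
  hence i1: "int d * int d \<le> int (mat.dim V) + (int d - int r) * (int d - int r)"
    unfolding of_nat_add e1 by simp
  have i2: "int (mat.dim V) \<le> int (cdim {X. \<phi> X = 0}) + int s * int s"
    using key by (simp flip: of_nat_mult of_nat_add)
  have g1: "int (cdim {X. \<phi> X = 0}) \<ge> 2 * int d * int r - int r ^ 2 - int s ^ 2"
    using i1 i2 by (simp add: power2_eq_square algebra_simps)
  have "int (r^2 + s^2) < int (2 * d * r)" using assms(4) unfolding r_def s_def H_def d_def by (simp only: of_nat_less_iff)
  hence g2: "2 * int d * int r - int r ^ 2 - int s ^ 2 > 0" unfolding of_nat_add of_nat_mult of_nat_power by simp
  show ?thesis using g1 g2 by (simp add: r_def s_def H_def d_def)
qed


end
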